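(* Let $C$ be a ring with vertices $v_0,\dots,v_{n-1}$ ($n\ge 3$), edges $e_i=(v_i,v_{i+1})$ for $i\in\{0,\dots,n-2\}$ and $e_{n-1}=(v_{n-1},v_0)$, positive edge weights $w$, and homebase $v_0$, and let $q\ge 0$ be the invoking cost. For each $i\in\{0,\dots,n-1\}$ let $C_i=C\setminus e_i$ (a path). For $i\in\{1,\dots,n-2\}$ let $v_i^{\min}$ (resp. $v_i^{\max}$) be the vertex among $v_i,v_{i+1}$ whose distance $d_{C_i}(v_0,\cdot)$ in $C_i$ is smaller (resp. larger). Set $c_0=q+w(C_0)$, $c_{n-1}=q+w(C_{n-1})$, and for $i\in\{1,\dots,n-2\}$ set $c_i=\min\{2q+w(C_i),\; q+d_{C_i}(v_0,v_i^{\min})+w(C_i)\}$. Let $i^*$ be an index minimizing $c_i$. Define the strategy $\mathcal{S}$ (procedure RingOffline) as follows: invoke an agent $a_1$ at $v_0$; if $i^*=0$, $a_1$ traverses the path $C_0$ from $v_0$ to $v_1$; if $i^*=n-1$, $a_1$ traverses the path $C_{n-1}$ from $v_0$ to $v_{n-1}$; if $1\le i^*\le n-2$ and $2q+w(C_{i^*})<q+d_{C_{i^*}}(v_0,v^{\min}_{i^*})+w(C_{i^*})$, then $a_1$ traverses the path in $C_{i^*}$ from $v_0$ to $v^{\min}_{i^*}$, a second agent $a_2$ is invoked at $v_0$ and traverses the path in $C_{i^*}$ from $v_0$ to $v^{\max}_{i^*}$; otherwise (with $1\le i^*\le n-2$) $a_1$ traverses the path in $C_{i^*}$ from $v_0$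 to $v^{\min}_{i^*}$ and then the path in $C_{i^*}$ from $v^{\min}_{i^*}$ to $v^{\max}_{i^*}$. Then $\mathcal{S}$ explores $C$ and is cost-optimal, i.e., its cost is minimum among all strategies exploring $C$.
   Context: Exploration model: a connected undirected graph with positive edge weights $w$ and a designated homebase vertex is given, together with an invoking cost $q\ge 0$. A strategy is a finite sequence of moves, each either (1) invoking a new agent, which appears at the homebase, or (2) an agent traversing an edge incident to its current vertex. A vertex is explored when it is visited for the first time; a strategy explores the graph if every vertex is visited by at least one agent (agents need not return to the homebase). If a strategy uses $k$ agents and agent $i$ traverses a total distance $d_i$ (sum of weights of the edges it traverses, with multiplicity), its cost is $kq+\sum_{i=1}^k d_i$. A strategy is cost-optimal (off-line setting, graph known in advance) if it explores the graph with minimum cost. For a subgraph $H$, $w(H)$ is the sum of the weights of its edges; $d_H(u,v)$ is the weighted shortest-path distance in $H$. *)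

theory Defs
  imports Main "HOL-Library.Extended_Real"
begin

text \<open>An undirected weighted graph is given by an edge set E (two-element vertex sets)
and a weight function W on edges. A move either invokes a new agent (which appears
at the homebase h) or lets agent j (0-based index, in order of invocation) traverse
the edge from its current vertex to the adjacent vertex v.\<close>

datatype 'a move = Invoke | Traverse nat 'a

text \<open>Execution state: positions of the invoked agents, accumulated cost, visited vertices.\<close>
type_synonym 'a xstate = "'a list \<times> real \<times> 'a set"

fun step :: "'a set set \<Rightarrow> ('a set \<Rightarrow> real) \<Rightarrow> 'a \<Rightarrow> real \<Rightarrow> 'a xstate \<Rightarrow> 'a move \<Rightarrow> 'a xstate option" where
  "step E W h q (pos, c, vis) Invoke = Some (pos @ [h], c + q, insert h vis)"
| "step E W h q (pos, c, vis) (Traverse j v) =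
     (if j < length pos \<and> {pos ! j, v} \<in> E
      then Some (pos[j := v], c + W {pos ! j, v}, insert v vis) else None)"

fun exec :: "'a set set \<Rightarrow> ('a set \<Rightarrow> real) \<Rightarrow> 'a \<Rightarrow> real \<Rightarrow> 'a xstate \<Rightarrow> 'a move list \<Rightarrow> 'a xstate option" where
  "exec E W h q st [] = Some st"
| "exec E W h q st (m # ms) = (case step E W h q st m of None \<Rightarrow> None | Some st' \<Rightarrow> exec E W h q st' ms)"

definition run :: "'a set set \<Rightarrow> ('a set \<Rightarrow> real) \<Rightarrow> 'a \<Rightarrow> real \<Rightarrow> 'a move list \<Rightarrow> 'a xstate option" where
  "run E W h q S = exec E W h q ([], 0, {}) S"

definition explores :: "'a set \<Rightarrow> 'a set set \<Rightarrow> ('a set \<Rightarrow> real) \<Rightarrow> 'a \<Rightarrow> real \<Rightarrow> 'a move list \<Rightarrow> bool" where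
  "explores V E W h q S \<longleftrightarrow> (\<exists>pos c vis. run E W h q S = Some (pos, c, vis) \<and> V \<subseteq> vis)"

text \<open>Cost = k q + total distance travelled (accumulated move by move).\<close>
definition strat_cost :: "'a set set \<Rightarrow> ('a set \<Rightarrow> real) \<Rightarrow> 'a \<Rightarrow> real \<Rightarrow> 'a move list \<Rightarrow> real" where
  "strat_cost E W h q S = (case run E W h q S of Some (pos, c, vis) \<Rightarrow> c | None \<Rightarrow> 0)"

definition cost_optimal :: "'a set \<Rightarrow> 'a set set \<Rightarrow> ('a set \<Rightarrow> real) \<Rightarrow> 'a \<Rightarrow> real \<Rightarrow> 'a move list \<Rightarrow> bool" where
  "cost_optimal V E W h q S \<longleftrightarrow> explores V E W h q S \<and>
     (\<forall>S'. explores V E W h q S' \<longrightarrow> strat_cost E W h q S \<le> strat_cost E W h q S')"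

definition wsub :: "('a set \<Rightarrow> real) \<Rightarrow> 'a set set \<Rightarrow> real" where
  "wsub W H = (\<Sum>e\<in>H. W e)"

definition is_walk :: "'a set set \<Rightarrow> 'a list \<Rightarrow> bool" where
  "is_walk H xs \<longleftrightarrow> xs \<noteq> [] \<and> (\<forall>k. Suc k < length xs \<longrightarrow> {xs ! k, xs ! Suc k} \<in> H)"

definition walk_len :: "('a set \<Rightarrow> real) \<Rightarrow> 'a list \<Rightarrow> real" where
  "walk_len W xs = (\<Sum>k<length xs - 1. W {xs ! k, xs ! Suc k})"

definition gdist :: "'a set set \<Rightarrow> ('a set \<Rightarrow> real) \<Rightarrow> 'a \<Rightarrow> 'a \<Rightarrow> real" where
  "gdist H W u v = Inf {walk_len W xs | xs. is_walk H xs \<and> hd xs = u \<and> last xs = v}"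

text \<open>Vertices 0..n-1, edge e_i = {i, (i+1) mod n} with weight w i, homebase 0.\<close>
definition ring_edge :: "nat \<Rightarrow> nat \<Rightarrow> nat set" where
  "ring_edge n i = {i, Suc i mod n}"

definition ring_edges :: "nat \<Rightarrow> nat set set" where
  "ring_edges n = ring_edge n ` {..<n}"

definition ring_W :: "nat \<Rightarrow> (nat \<Rightarrow> real) \<Rightarrow> nat set \<Rightarrow> real" where
  "ring_W n w e = (\<Sum>i | i < n \<and> ring_edge n i = e. w i)"

definition Cpath :: "nat \<Rightarrow> nat \<Rightarrow> nat set set" where
  "Cpath n i = ring_edges n - {ring_edge n i}"

definition dC :: "nat \<Rightarrow> (nat \<Rightarrow> real) \<Rightarrow> nat \<Rightarrow> nat \<Rightarrow> real" where
  "dC n w i v = gdist (Cpath n i) (ring_W n w) 0 v"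

definition wC :: "nat \<Rightarrow> (nat \<Rightarrow> real) \<Rightarrow> nat \<Rightarrow> real" where
  "wC n w i = wsub (ring_W n w) (Cpath n i)"

text \<open>v_i^min / v_i^max (ties resolved in favour of v_i as v^min).\<close>
definition vmin :: "nat \<Rightarrow> (nat \<Rightarrow> real) \<Rightarrow> nat \<Rightarrow> nat" where
  "vmin n w i = (if dC n w i i \<le> dC n w i (Suc i) then i else Suc i)"

definition vmax :: "nat \<Rightarrow> (nat \<Rightarrow> real) \<Rightarrow> nat \<Rightarrow> nat" where
  "vmax n w i = (if dC n w i i \<le> dC n w i (Suc i) then Suc i else i)"

definition ccost :: "nat \<Rightarrow> (nat \<Rightarrow> real) \<Rightarrow> real \<Rightarrow> nat \<Rightarrow> real" where
  "ccost n w q i = (if i = 0 \<or> i = n - 1 then q + wC n w i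
     else min (2 * q + wC n w i) (q + dC n w i (vmin n w i) + wC n w i))"

definition trav :: "nat \<Rightarrow> nat list \<Rightarrow> nat move list" where
  "trav j vs = map (Traverse j) vs"

text \<open>Vertex sequence (excluding the start) of the path in C_i (1 \<le> i \<le> n-2) from v_0 to v:
  to v_i it is 1,2,...,i; to v_{i+1} it is n-1, n-2, ..., i+1.\<close>
definition path_from0 :: "nat \<Rightarrow> nat \<Rightarrow> nat \<Rightarrow> nat list" where
  "path_from0 n i v = (if v = i then [1..<Suc i] else rev [Suc i..<n])"

text \<open>Vertex sequence (excluding the start) of the path in C_i from u to the other endpoint
  of e_i (u \<in> {v_i, v_{i+1}}).\<close>
definition path_between :: "nat \<Rightarrow> nat \<Rightarrow> nat \<Rightarrow> nat list" where
  "path_between n i u = (if u = i then rev [0..<i] @ rev [Suc i..<n]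
                         else [Suc (Suc i)..<n] @ [0..<Suc i])"

definition RingOffline :: "nat \<Rightarrow> (nat \<Rightarrow> real) \<Rightarrow> real \<Rightarrow> nat \<Rightarrow> nat move list" where
  "RingOffline n w q istar =
    (if istar = 0 then Invoke # trav 0 (rev [1..<n])
     else if istar = n - 1 then Invoke # trav 0 [1..<n]
     else if 2 * q + wC n w istar < q + dC n w istar (vmin n w istar) + wC n w istar
     then (Invoke # trav 0 (path_from0 n istar (vmin n w istar)))
          @ (Invoke # trav 1 (path_from0 n istar (vmax n w istar)))
     else (Invoke # trav 0 (path_from0 n istar (vmin n w istar)))
          @ trav 0 (path_between n istar (vmin n w istar)))"

end

theory Submission
  imports Defs
begin


fun wl :: "('a set \<Rightarrow> real) \<Rightarrow> 'a list \<Rightarrow> real" where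
  "wl W (x # y # zs) = W {x, y} + wl W (y # zs)"
| "wl W _ = 0"

fun iw :: "'a set set \<Rightarrow> 'a list \<Rightarrow> bool" where
  "iw H (x # y # zs) = ({x, y} \<in> H \<and> iw H (y # zs))"
| "iw H _ = True"

lemma walk_len_wl: "walk_len W xs = wl W xs"
proof (induction W xs rule: wl.induct)
  case (1 W x y zs)
  have "walk_len W (x # y # zs) = (\<Sum>k<Suc (length zs). W {(x#y#zs) ! k, (x#y#zs) ! Suc k})"
    by (simp add: walk_len_def)
  also have "\<dots> = W {x, y} + (\<Sum>k<length zs. W {(y#zs) ! k, (y#zs) ! Suc k})"
    by (subst sum.lessThan_Suc_shift) simp
  also have "(\<Sum>k<length zs. W {(y#zs) ! k, (y#zs) ! Suc k}) = walk_len W (y # zs)"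
    by (simp add: walk_len_def)
  finally show ?case using 1 by simp
qed (auto simp: walk_len_def)

lemma is_walk_iw: "is_walk H xs \<longleftrightarrow> xs \<noteq> [] \<and> iw H xs"
proof (induction H xs rule: iw.induct)
  case (1 H x y zs)
  have "is_walk H (x # y # zs) \<longleftrightarrow> {x, y} \<in> H \<and> is_walk H (y # zs)"
    unfolding is_walk_def
    apply (auto simp: less_Suc_eq_0_disj)
    done
  then show ?case using 1 by simp
next
  case ("2_2" H v) then show ?case by (simp add: is_walk_def)
qed (simp add: is_walk_def)

lemma wl_snoc: "xs \<noteq> [] \<Longrightarrow> wl W (xs @ [y]) = wl W xs + W {last xs, y}"
  by (induction W xs rule: wl.induct) auto

lemma iw_snoc: "xs \<noteq> [] \<Longrightarrow> iw H (xs @ [y]) \<longleftrightarrow> iw H xs \<and> {last xs, y} \<in> H"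
  by (induction H xs rule: iw.induct) auto

lemma wl_append: "xs \<noteq> [] \<Longrightarrow> ys \<noteq> [] \<Longrightarrow> wl W (xs @ ys) = wl W xs + W {last xs, hd ys} + wl W ys"
proof (induction ys arbitrary: xs)
  case Nil then show ?case by simp
next
  case (Cons y ys)
  show ?case
  proof (cases ys)
    case Nil then show ?thesis using Cons by (simp add: wl_snoc)
  next
    case (Cons y' ys')
    have "wl W (xs @ y # ys) = wl W ((xs @ [y]) @ ys)" by simp
    also have "\<dots> = wl W (xs @ [y]) + W {y, hd ys} + wl W ys" using Cons.IH[of "xs @ [y]"] Cons by simp
    also have "\<dots> = wl W xs + W {last xs, y} + wl W (y # ys)" using Cons \<open>xs \<noteq> []\<close> by (simp add: wl_snoc)
    finally show ?thesis by simp
  qed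
qed

lemma iw_append: "xs \<noteq> [] \<Longrightarrow> ys \<noteq> [] \<Longrightarrow> iw H (xs @ ys) \<longleftrightarrow> iw H xs \<and> {last xs, hd ys} \<in> H \<and> iw H ys"
proof (induction ys arbitrary: xs)
  case Nil then show ?case by simp
next
  case (Cons y ys)
  show ?case
  proof (cases ys)
    case Nil then show ?thesis using Cons by (simp add: iw_snoc)
  next
    case (Cons y' ys')
    have "iw H (xs @ y # ys) = iw H ((xs @ [y]) @ ys)" by simp
    also have "\<dots> = (iw H (xs @ [y]) \<and> {y, hd ys} \<in> H \<and> iw H ys)" using Cons.IH[of "xs @ [y]"] Cons by simp
    also have "\<dots> = (iw H xs \<and> {last xs, y} \<in> H \<and> iw H (y # ys))" using Cons \<open>xs \<noteq> []\<close> by (auto simp add: iw_snoc)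
    finally show ?thesis by simp
  qed
qed

lemma wl_rev: "wl W (rev xs) = wl W xs"
proof (induction W xs rule: wl.induct)
  case (1 W x y zs)
  have "wl W (rev (x # y # zs)) = wl W (rev (y # zs) @ [x])" by simp
  also have "\<dots> = wl W (rev (y # zs)) + W {y, x}" by (subst wl_snoc) (auto simp: last_rev)
  finally show ?case using 1 by (simp add: insert_commute)
qed auto

lemma iw_rev: "iw H (rev xs) = iw H xs"
proof (induction H xs rule: iw.induct)
  case (1 H x y zs)
  have "iw H (rev (x # y # zs)) = iw H (rev (y # zs) @ [x])" by simp
  also have "\<dots> = (iw H (rev (y # zs)) \<and> {y, x} \<in> H)" by (subst iw_snoc) (auto simp: last_rev)
  finally show ?case using 1 by (auto simp add: insert_commute)
qed auto

lemma wl_lower: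
  assumes "\<And>u v. {u, v} \<in> H \<Longrightarrow> \<bar>f u - f v\<bar> \<le> W {u, v}"
  shows "iw H xs \<Longrightarrow> xs \<noteq> [] \<Longrightarrow> \<bar>f (last xs) - f (hd xs)\<bar> \<le> wl W xs"
proof (induction xs rule: induct_list012)
  case (3 x y zs)
  have e: "\<bar>f y - f x\<bar> \<le> W {x, y}" using assms[of x y] 3 by (simp add: abs_minus_commute)
  have "\<bar>f (last (y # zs)) - f y\<bar> \<le> wl W (y # zs)" using 3 by simp
  moreover have "last (x # y # zs) = last (y # zs)" by simp
  ultimately show ?case using e by (simp only: wl.simps list.sel)
qed auto

lemma exec_append: "exec E W h q st (xs @ ys) = (case exec E W h q st xs of None \<Rightarrow> None | Some st' \<Rightarrow> exec E W h q st' ys)"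
  by (induction xs arbitrary: st) (auto split: option.split)

lemma exec_trav: "j < length pos \<Longrightarrow> iw E (pos ! j # vs) \<Longrightarrow>
  exec E W h q (pos, c, vis) (trav j vs) = Some (pos[j := last (pos ! j # vs)], c + wl W (pos ! j # vs), vis \<union> set vs)"
proof (induction vs arbitrary: pos c vis)
  case Nil then show ?case by (simp add: trav_def)
next
  case (Cons v vs)
  have "exec E W h q (pos, c, vis) (trav j (v # vs)) = exec E W h q (pos[j := v], c + W {pos ! j, v}, insert v vis) (trav j vs)"
    using Cons.prems by (simp add: trav_def)
  also have "\<dots> = Some ((pos[j := v])[j := last (v # vs)], c + W {pos ! j, v} + wl W (v # vs), insert v vis \<union> set vs)"
    using Cons.IH[of "pos[j := v]"] Cons.prems by simp
  finally show ?case by (simp add: add.assoc)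
qed



definition ps :: "(nat \<Rightarrow> real) \<Rightarrow> nat \<Rightarrow> real" where
  "ps w v = (\<Sum>t<v. w t)"

lemma ps_0[simp]: "ps w 0 = 0" by (simp add: ps_def)
lemma ps_Suc: "ps w (Suc v) = ps w v + w v" by (simp add: ps_def)

lemma ps_mono: "\<forall>i<n. w i > 0 \<Longrightarrow> a \<le> b \<Longrightarrow> b \<le> n \<Longrightarrow> ps w a \<le> ps w b"
proof (induction b)
  case 0 then show ?case by simp
next
  case (Suc b)
  then show ?case by (cases "a = Suc b") (auto simp: ps_Suc less_eq_Suc_le[symmetric] intro: order.trans[OF _ less_imp_le])
qed

lemma ring_edge_simp: "Suc i < n \<Longrightarrow> ring_edge n i = {i, Suc i}"
  by (simp add: ring_edge_def)

lemma ring_edge_last: "n \<ge> 1 \<Longrightarrow> ring_edge n (n - 1) = {n - 1, 0}"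
  by (simp add: ring_edge_def)

lemma ring_edge_cases: "i < n \<Longrightarrow> (Suc i < n \<and> ring_edge n i = {i, Suc i}) \<or> (i = n - 1 \<and> ring_edge n i = {n - 1, 0})"
proof (cases "Suc i < n")
  case True then show ?thesis by (simp add: ring_edge_def)
next
  case False
  assume "i < n"
  then have "Suc i = n" using False by simp
  then have "i = n - 1" by simp
  then show ?thesis using \<open>Suc i = n\<close> by (simp add: ring_edge_def)
qed

lemma ring_edge_inj:
  assumes "n \<ge> 3" "i < n" "i' < n" "ring_edge n i = ring_edge n i'"
  shows "i = i'"
proof (rule ccontr)
  assume ne: "i \<noteq> i'"
  from ring_edge_cases[OF assms(2)] ring_edge_cases[OF assms(3)] assms(4)
  show False
  proof (elim disjE conjE)
    assume "ring_edge n i = {i, Suc i}" "ring_edge n i' = {i', Suc i'}" "ring_edge n i = ring_edge n i'"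
    then have "i \<in> {i', Suc i'}" "i' \<in> {i, Suc i}" by auto
    then show False using ne by auto
  next
    assume "Suc i < n" "ring_edge n i = {i, Suc i}" "i' = n - 1" "ring_edge n i' = {n - 1, 0}" "ring_edge n i = ring_edge n i'"
    then have "0 \<in> {i, Suc i}" "n - 1 \<in> {i, Suc i}" by auto
    then show False using assms(1) by auto
  next
    assume "Suc i' < n" "ring_edge n i' = {i', Suc i'}" "i = n - 1" "ring_edge n i = {n - 1, 0}" "ring_edge n i = ring_edge n i'"
    then have "0 \<in> {i', Suc i'}" "n - 1 \<in> {i', Suc i'}" by auto
    then show False using assms(1) by auto
  next
    assume "i = n - 1" "i' = n - 1" then show False using ne by simp
  qed
qed

lemma ring_W_edge:
  assumes "n \<ge> 3" "i < n"
  shows "ring_W n w (ring_edge n i) = w i"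
proof -
  have "{i'. i' < n \<and> ring_edge n i' = ring_edge n i} = {i}"
    using ring_edge_inj[OF assms(1) _ assms(2)] assms(2) by auto
  then show ?thesis by (simp add: ring_W_def)
qed

lemma ring_W_succ: "n \<ge> 3 \<Longrightarrow> Suc i < n \<Longrightarrow> ring_W n w {i, Suc i} = w i"
  using ring_W_edge[of n i w] ring_edge_simp[of i n] by simp

lemma ring_W_wrap: "n \<ge> 3 \<Longrightarrow> ring_W n w {n - 1, 0} = w (n - 1)"
  using ring_W_edge[of n "n - 1" w] ring_edge_last[of n] by simp

lemma ring_edges_succ: "Suc i < n \<Longrightarrow> {i, Suc i} \<in> ring_edges n"
  unfolding ring_edges_def using ring_edge_simp[of i n] by (metis Suc_lessD image_eqI lessThan_iff)

lemma ring_edges_wrap: "n \<ge> 3 \<Longrightarrow> {n - 1, 0} \<in> ring_edges n"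
proof -
  assume "n \<ge> 3"
  then have "n - 1 \<in> {..<n}" by simp
  then show ?thesis unfolding ring_edges_def using ring_edge_last[of n] \<open>n \<ge> 3\<close> by (metis image_eqI le_trans one_le_numeral)
qed

lemma Cpath_succ: "n \<ge> 3 \<Longrightarrow> Suc i < n \<Longrightarrow> i \<noteq> j \<Longrightarrow> j < n \<Longrightarrow> {i, Suc i} \<in> Cpath n j"
  unfolding Cpath_def using ring_edges_succ[of i n] ring_edge_simp[of i n] ring_edge_inj[of n i j] by auto

lemma Cpath_wrap: "n \<ge> 3 \<Longrightarrow> j < n - 1 \<Longrightarrow> {n - 1, 0} \<in> Cpath n j"
proof -
  assume a: "n \<ge> 3" "j < n - 1"
  then have "ring_edge n (n - 1) \<noteq> ring_edge n j"
  proof -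
    have "n - 1 < n" "j < n" "n - 1 \<noteq> j" using a by auto
    then show ?thesis using ring_edge_inj[OF a(1)] by blast
  qed
  then show ?thesis unfolding Cpath_def using ring_edges_wrap[OF a(1)] ring_edge_last[of n] a by auto
qed

lemma wl_upt:
  assumes "n \<ge> 3" "b < n" "a \<le> b"
  shows "wl (ring_W n w) [a..<Suc b] = ps w b - ps w a"
  using assms(2,3)
proof (induction b)
  case 0 then show ?case by simp
next
  case (Suc b)
  show ?case
  proof (cases "a = Suc b")
    case True then show ?thesis by simp
  next
    case False
    then have ab: "a \<le> b" using Suc by simp
    have "[a..<Suc (Suc b)] = [a..<Suc b] @ [Suc b]" using ab by simp
    then have "wl (ring_W n w) [a..<Suc (Suc b)] = wl (ring_W n w) [a..<Suc b] + ring_W n w {b, Suc b}"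
      using ab by (simp add: wl_snoc del: upt_Suc)
    then show ?thesis using Suc ab ring_W_succ[OF assms(1), of b w] by (simp add: ps_Suc del: upt_Suc)
  qed
qed

lemma iw_upt:
  assumes "\<And>t. a \<le> t \<Longrightarrow> t < b \<Longrightarrow> {t, Suc t} \<in> H" "a \<le> b"
  shows "iw H [a..<Suc b]"
  using assms
proof (induction b)
  case 0 then show ?case by simp
next
  case (Suc b)
  show ?case
  proof (cases "a = Suc b")
    case True then show ?thesis by simp
  next
    case False
    then have ab: "a \<le> b" using Suc by simp
    have "[a..<Suc (Suc b)] = [a..<Suc b] @ [Suc b]" using ab by simp
    then show ?thesis using Suc ab by (simp add: iw_snoc del: upt_Suc)
  qed
qed



lemma wC_eq:
  assumes "n \<ge> 3" "j < n"
  shows "wC n w j = ps w n - w j"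
proof -
  have inj: "inj_on (ring_edge n) {..<n}" using ring_edge_inj[OF assms(1)] by (auto simp: inj_on_def)
  have "Cpath n j = ring_edge n ` ({..<n} - {j})"
    unfolding Cpath_def ring_edges_def using inj assms(2) by (auto simp: inj_on_image_set_diff[OF inj])
  then have "wC n w j = (\<Sum>i\<in>{..<n} - {j}. ring_W n w (ring_edge n i))"
    unfolding wC_def wsub_def using inj by (simp add: sum.reindex inj_on_diff)
  also have "\<dots> = (\<Sum>i\<in>{..<n} - {j}. w i)" using ring_W_edge[OF assms(1)] by (intro sum.cong) auto
  also have "\<dots> = ps w n - w j" using assms(2) by (simp add: sum_diff1 ps_def)
  finally show ?thesis .
qed

definition xj :: "nat \<Rightarrow> (nat \<Rightarrow> real) \<Rightarrow> nat \<Rightarrow> nat \<Rightarrow> real" where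
  "xj n w j v = (if v \<le> j then ps w v else ps w v - ps w n)"

lemma xj_edge:
  assumes "n \<ge> 3" "\<forall>i<n. w i > 0" "{u, v} \<in> Cpath n j" "j < n"
  shows "\<bar>xj n w j u - xj n w j v\<bar> \<le> ring_W n w {u, v}"
proof -
  obtain i where i: "i < n" "{u, v} = ring_edge n i" "i \<noteq> j"
    using assms(3) unfolding Cpath_def ring_edges_def by auto
  have W: "ring_W n w {u, v} = w i" using i ring_W_edge[OF assms(1)] by simp
  from ring_edge_cases[OF i(1)] show ?thesis
  proof (elim disjE conjE)
    assume "Suc i < n" "ring_edge n i = {i, Suc i}"
    then have uv: "(u = i \<and> v = Suc i) \<or> (u = Suc i \<and> v = i)" using i by (auto simp: doubleton_eq_iff)
    have "\<bar>xj n w j i - xj n w j (Suc i)\<bar> = w i"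
      using i(3) assms(2) i(1) by (auto simp: xj_def ps_Suc)
    then show ?thesis using uv W by (auto simp: abs_minus_commute)
  next
    assume a: "i = n - 1" "ring_edge n i = {n - 1, 0}"
    then have uv: "(u = n - 1 \<and> v = 0) \<or> (u = 0 \<and> v = n - 1)" using i by (auto simp: doubleton_eq_iff)
    have jl: "j < n - 1" using a i assms by auto
    have L: "ps w n = ps w (n - 1) + w (n - 1)" using assms(1) ps_Suc[of w "n - 1"] by simp
    have wp: "w (n - 1) > 0" using assms(1,2) by simp
    have "\<bar>xj n w j (n - 1) - xj n w j 0\<bar> = w (n - 1)"
      using jl L wp by (auto simp: xj_def)
    then show ?thesis using uv W a by (auto simp: abs_minus_commute)
  qed
qed

lemma walk_lower_xj:
  assumes "n \<ge> 3" "\<forall>i<n. w i > 0" "j < n" "is_walk (Cpath n j) xs"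
  shows "\<bar>xj n w j (last xs) - xj n w j (hd xs)\<bar> \<le> walk_len (ring_W n w) xs"
  using wl_lower[of "Cpath n j" "xj n w j" "ring_W n w" xs] xj_edge[OF assms(1,2) _ assms(3)] assms(4)
  by (simp add: walk_len_wl is_walk_iw)

lemma dC_j:
  assumes "n \<ge> 3" "\<forall>i<n. w i > 0" "Suc j < n"
  shows "dC n w j j = ps w j"
  unfolding dC_def gdist_def
proof (rule cInf_eq_minimum)
  have "iw (Cpath n j) [0..<Suc j]"
    by (rule iw_upt) (use Cpath_succ[OF assms(1)] assms(3) in auto)
  then have "is_walk (Cpath n j) [0..<Suc j]"
    unfolding is_walk_iw by (simp del: upt_Suc)
  moreover have "walk_len (ring_W n w) [0..<Suc j] = ps w j"
    using wl_upt[OF assms(1), of j 0 w] assms(3) by (simp add: walk_len_wl del: upt_Suc)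
  ultimately show "ps w j \<in> {walk_len (ring_W n w) xs |xs. is_walk (Cpath n j) xs \<and> hd xs = 0 \<and> last xs = j}"
    by (intro CollectI exI[of _ "[0..<Suc j]"]) (simp del: upt_Suc add: hd_upt last_upt)
next
  fix x assume "x \<in> {walk_len (ring_W n w) xs |xs. is_walk (Cpath n j) xs \<and> hd xs = 0 \<and> last xs = j}"
  then obtain xs where xs: "x = walk_len (ring_W n w) xs" "is_walk (Cpath n j) xs" "hd xs = 0" "last xs = j" by auto
  have "\<bar>xj n w j (last xs) - xj n w j (hd xs)\<bar> \<le> x" using walk_lower_xj[OF assms(1,2) _ xs(2)] xs(1) assms(3) by simp
  then show "ps w j \<le> x" using xs by (simp add: xj_def)
qed

lemma dC_Sj:
  assumes "n \<ge> 3" "\<forall>i<n. w i > 0" "Suc j < n"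
  shows "dC n w j (Suc j) = ps w n - ps w (Suc j)"
  unfolding dC_def gdist_def
proof (rule cInf_eq_minimum)
  define xs where "xs = [Suc j..<Suc (n - 1)] @ [0]"
  have ne: "[Suc j..<Suc (n - 1)] \<noteq> []" using assms by simp
  have lst: "last [Suc j..<Suc (n - 1)] = n - 1" using assms by simp
  have "iw (Cpath n j) [Suc j..<Suc (n - 1)]"
    by (rule iw_upt) (use Cpath_succ[OF assms(1)] assms(3) in auto)
  then have "iw (Cpath n j) xs" unfolding xs_def using ne lst Cpath_wrap[OF assms(1)] assms(3)
    by (simp add: iw_snoc del: upt_Suc)
  then have "iw (Cpath n j) (rev xs)" by (simp only: iw_rev)
  moreover have "rev xs \<noteq> []" by (simp add: xs_def)
  ultimately have w1: "is_walk (Cpath n j) (rev xs)" unfolding is_walk_iw by blast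
  have L: "ps w n = ps w (n - 1) + w (n - 1)" using assms(1) ps_Suc[of w "n - 1"] by simp
  have "walk_len (ring_W n w) (rev xs) = wl (ring_W n w) xs" by (simp only: walk_len_wl wl_rev)
  also have "\<dots> = wl (ring_W n w) [Suc j..<Suc (n - 1)] + ring_W n w {last [Suc j..<Suc (n - 1)], 0}"
    unfolding xs_def by (rule wl_snoc[OF ne])
  also have "\<dots> = wl (ring_W n w) [Suc j..<Suc (n - 1)] + ring_W n w {n - 1, 0}" by (simp only: lst)
  also have "\<dots> = ps w n - ps w (Suc j)"
    using wl_upt[OF assms(1), of "n - 1" "Suc j" w] assms ring_W_wrap[OF assms(1)] L by (simp del: upt_Suc)
  finally have w2: "walk_len (ring_W n w) (rev xs) = ps w n - ps w (Suc j)" .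
  have "hd (rev xs) = 0" "last (rev xs) = Suc j" unfolding xs_def using assms by (simp_all add: hd_rev last_rev del: upt_Suc) 
  then show "ps w n - ps w (Suc j) \<in> {walk_len (ring_W n w) xs |xs. is_walk (Cpath n j) xs \<and> hd xs = 0 \<and> last xs = Suc j}"
    using w1 w2 by (intro CollectI exI[of _ "rev xs"]) simp
next
  fix x assume "x \<in> {walk_len (ring_W n w) xs |xs. is_walk (Cpath n j) xs \<and> hd xs = 0 \<and> last xs = Suc j}"
  then obtain xs where xs: "x = walk_len (ring_W n w) xs" "is_walk (Cpath n j) xs" "hd xs = 0" "last xs = Suc j" by auto
  have "\<bar>xj n w j (last xs) - xj n w j (hd xs)\<bar> \<le> x" using walk_lower_xj[OF assms(1,2) _ xs(2)] xs(1) assms(3) by simp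
  moreover have "ps w (Suc j) \<le> ps w n" using ps_mono[OF assms(2)] assms(3) by simp
  ultimately show "ps w n - ps w (Suc j) \<le> x" using xs by (simp add: xj_def)
qed



lemma edge_lift:
  assumes "n \<ge> 3" "\<forall>i<n. w i > 0" "{u, v} \<in> ring_edges n"
  shows "v < n \<and> (\<exists>d. \<bar>d\<bar> = ring_W n w {u, v} \<and> (\<forall>z::int. \<exists>z'::int. ps w u + of_int z * ps w n + d = ps w v + of_int z' * ps w n))"
proof -
  obtain i where i: "i < n" "{u, v} = ring_edge n i" using assms(3) unfolding ring_edges_def by auto
  have W: "ring_W n w {u, v} = w i" using i ring_W_edge[OF assms(1)] by simp
  have wp: "w i > 0" using assms(2) i by simp
  from ring_edge_cases[OF i(1)] show ?thesis
  proof (elim disjE conjE)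
    assume a: "Suc i < n" "ring_edge n i = {i, Suc i}"
    then have uv: "(u = i \<and> v = Suc i) \<or> (u = Suc i \<and> v = i)" using i by (auto simp: doubleton_eq_iff)
    then show ?thesis
    proof
      assume "u = i \<and> v = Suc i"
      then show ?thesis using a W wp by (intro conjI exI[of _ "w i"]) (auto simp: ps_Suc)
    next
      assume "u = Suc i \<and> v = i"
      then show ?thesis using a W wp by (intro conjI exI[of _ "- w i"]) (auto simp: ps_Suc)
    qed
  next
    assume a: "i = n - 1" "ring_edge n i = {n - 1, 0}"
    then have uv: "(u = n - 1 \<and> v = 0) \<or> (u = 0 \<and> v = n - 1)" using i by (auto simp: doubleton_eq_iff)
    have L: "ps w n = ps w (n - 1) + w (n - 1)" using assms(1) ps_Suc[of w "n - 1"] by simp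
    from uv show ?thesis
    proof
      assume "u = n - 1 \<and> v = 0"
      then show ?thesis using a W wp L assms(1)
        apply (intro conjI exI[of _ "w i"])
          apply simp_all
        apply (intro allI exI[of _ "_ + 1"])
        apply (simp add: algebra_simps)
        done
    next
      assume "u = 0 \<and> v = n - 1"
      then show ?thesis using a W wp L assms(1)
        apply (intro conjI exI[of _ "- w i"])
          apply simp_all
        apply (intro allI exI[of _ "_ - 1"])
        apply (simp add: algebra_simps)
        done
    qed
  qed
qed

definition Inv :: "nat \<Rightarrow> (nat \<Rightarrow> real) \<Rightarrow> real \<Rightarrow> nat list \<Rightarrow> real \<Rightarrow> nat set \<Rightarrow> bool" where
  "Inv n w q pos c vis \<longleftrightarrow> (pos = [] \<longrightarrow> vis = {}) \<and> (\<forall>p\<in>set pos. p < n) \<and>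
    (\<exists>P Hi Lo. length P = length pos \<and>
      (\<forall>m<length pos. (\<exists>z::int. P ! m = ps w (pos ! m) + of_int z * ps w n) \<and> Lo \<le> P ! m \<and> P ! m \<le> Hi) \<and>
      Lo \<le> 0 \<and> 0 \<le> Hi \<and>
      (\<forall>v\<in>vis. \<exists>z::int. Lo \<le> ps w v + of_int z * ps w n \<and> ps w v + of_int z * ps w n \<le> Hi) \<and>
      Hi - Lo \<le> c - real (length pos) * q \<and>
      2 * (Hi - Lo) - sum_list (map abs P) \<le> c - real (length pos) * q)"

lemma InvI:
  assumes "pos = [] \<longrightarrow> vis = {}" "\<forall>p\<in>set pos. p < n" "length P = length pos"
    "\<forall>m<length pos. (\<exists>z::int. P ! m = ps w (pos ! m) + of_int z * ps w n) \<and> Lo \<le> P ! m \<and> P ! m \<le> Hi"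
    "Lo \<le> 0" "0 \<le> Hi"
    "\<forall>v\<in>vis. \<exists>z::int. Lo \<le> ps w v + of_int z * ps w n \<and> ps w v + of_int z * ps w n \<le> Hi"
    "Hi - Lo \<le> c - real (length pos) * q"
    "2 * (Hi - Lo) - sum_list (map abs P) \<le> c - real (length pos) * q"
  shows "Inv n w q pos c vis"
  unfolding Inv_def using assms by blast

lemma sum_list_upd: "k < length xs \<Longrightarrow> sum_list (xs[k := x]) = sum_list xs - xs ! k + (x :: real)"
  by (induction xs arbitrary: k) (auto split: nat.split)

lemma Inv_init: "Inv n w q [] 0 {}"
  unfolding Inv_def by (intro conjI exI[of _ "[]"] exI[of _ "0::real"]) auto

lemma Inv_step:
  assumes "n \<ge> 3" "\<forall>i<n. w i > 0" "Inv n w q pos c vis"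
    and "step (ring_edges n) (ring_W n w) 0 q (pos, c, vis) mv = Some (pos', c', vis')"
  shows "Inv n w q pos' c' vis'"
proof (cases mv)
  case Invoke
  then have st: "pos' = pos @ [0]" "c' = c + q" "vis' = insert 0 vis" using assms(4) by auto
  from assms(3) obtain P Hi Lo where I: "(pos = [] \<longrightarrow> vis = {})" "(\<forall>p\<in>set pos. p < n)"
    "length P = length pos"
    "\<forall>m<length pos. (\<exists>z::int. P ! m = ps w (pos ! m) + of_int z * ps w n) \<and> Lo \<le> P ! m \<and> P ! m \<le> Hi"
    "Lo \<le> 0" "0 \<le> Hi"
    "\<forall>v\<in>vis. \<exists>z::int. Lo \<le> ps w v + of_int z * ps w n \<and> ps w v + of_int z * ps w n \<le> Hi"
    "Hi - Lo \<le> c - real (length pos) * q"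
    "2 * (Hi - Lo) - sum_list (map abs P) \<le> c - real (length pos) * q"
    unfolding Inv_def by blast
  show ?thesis unfolding st
  proof (rule InvI[where P="P @ [0]" and Hi=Hi and Lo=Lo])
    show "\<forall>m<length (pos @ [0]). (\<exists>z::int. (P @ [0]) ! m = ps w ((pos @ [0]) ! m) + of_int z * ps w n) \<and> Lo \<le> (P @ [0]) ! m \<and> (P @ [0]) ! m \<le> Hi"
    proof (intro allI impI)
      fix m assume "m < length (pos @ [0])"
      then consider "m < length pos" | "m = length pos" by fastforce
      then show "(\<exists>z::int. (P @ [0]) ! m = ps w ((pos @ [0]) ! m) + of_int z * ps w n) \<and> Lo \<le> (P @ [0]) ! m \<and> (P @ [0]) ! m \<le> Hi"
      proof cases
        case 1 then show ?thesis using I(3,4) by (simp add: nth_append)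
      next
        case 2 then show ?thesis using I(3,5,6) by (auto simp: nth_append intro: exI[of _ 0])
      qed
    qed
    show "\<forall>v\<in>insert 0 vis. \<exists>z::int. Lo \<le> ps w v + of_int z * ps w n \<and> ps w v + of_int z * ps w n \<le> Hi"
      using I(5,6,7) by (auto intro: exI[of _ 0])
  qed (use I assms(1) in \<open>auto simp: algebra_simps\<close>)
next
  case (Traverse j v)
  from assms(4) Traverse have jl: "j < length pos" and e: "{pos ! j, v} \<in> ring_edges n"
    and st: "pos' = pos[j := v]" "c' = c + ring_W n w {pos ! j, v}" "vis' = insert v vis"
    by (auto split: if_splits)
  from assms(3) obtain P Hi Lo where I: "(pos = [] \<longrightarrow> vis = {})" "(\<forall>p\<in>set pos. p < n)"
    "length P = length pos"
    "\<forall>m<length pos. (\<exists>z::int. P ! m = ps w (pos ! m) + of_int z * ps w n) \<and> Lo \<le> P ! m \<and> P ! m \<le> Hi"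
    "Lo \<le> 0" "0 \<le> Hi"
    "\<forall>v\<in>vis. \<exists>z::int. Lo \<le> ps w v + of_int z * ps w n \<and> ps w v + of_int z * ps w n \<le> Hi"
    "Hi - Lo \<le> c - real (length pos) * q"
    "2 * (Hi - Lo) - sum_list (map abs P) \<le> c - real (length pos) * q"
    unfolding Inv_def by blast
  obtain d where vn: "v < n" and d: "\<bar>d\<bar> = ring_W n w {pos ! j, v}"
    and dz: "\<forall>z::int. \<exists>z'::int. ps w (pos ! j) + of_int z * ps w n + d = ps w v + of_int z' * ps w n"
    using edge_lift[OF assms(1,2) e] by blast
  define p where "p = P ! j"
  define p' where "p' = p + d"
  define Hi' where "Hi' = max Hi p'"
  define Lo' where "Lo' = min Lo p'"
  obtain z0 :: int where z0: "p = ps w (pos ! j) + of_int z0 * ps w n" using I(4) jl p_def by blast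
  obtain z1 :: int where z1: "p' = ps w v + of_int z1 * ps w n" using dz z0 p'_def by metis
  have pb: "Lo \<le> p" "p \<le> Hi" using I(4) jl p_def by auto
  have sl: "sum_list (map abs (P[j := p'])) = sum_list (map abs P) - \<bar>p\<bar> + \<bar>p'\<bar>"
    using sum_list_upd[of j "map abs P" "\<bar>p'\<bar>"] jl I(3) p_def by (simp add: map_update)
  show ?thesis unfolding st
  proof (rule InvI[where P="P[j := p']" and Hi=Hi' and Lo=Lo'])
    show "pos[j := v] = [] \<longrightarrow> insert v vis = {}" using jl by auto
    show "\<forall>p\<in>set (pos[j := v]). p < n" using I(2) vn by (auto dest: set_update_subset_insert[THEN subsetD])
    show "length (P[j := p']) = length (pos[j := v])" using I(3) by simp
    show "\<forall>m<length (pos[j := v]). (\<exists>z::int. P[j := p'] ! m = ps w (pos[j := v] ! m) + of_int z * ps w n) \<and> Lo' \<le> P[j := p'] ! m \<and> P[j := p'] ! m \<le> Hi'"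
    proof (intro allI impI)
      fix m assume m: "m < length (pos[j := v])"
      show "(\<exists>z::int. P[j := p'] ! m = ps w (pos[j := v] ! m) + of_int z * ps w n) \<and> Lo' \<le> P[j := p'] ! m \<and> P[j := p'] ! m \<le> Hi'"
      proof (cases "m = j")
        case True then show ?thesis using z1 jl I(3) by (auto simp: Hi'_def Lo'_def)
      next
        case False then show ?thesis using I(3,4) m by (auto simp: Hi'_def Lo'_def)
      qed
    qed
    show "Lo' \<le> 0" "0 \<le> Hi'" using I(5,6) by (auto simp: Hi'_def Lo'_def)
    show "\<forall>v'\<in>insert v vis. \<exists>z::int. Lo' \<le> ps w v' + of_int z * ps w n \<and> ps w v' + of_int z * ps w n \<le> Hi'"
    proof
      fix v' assume "v' \<in> insert v vis"
      then show "\<exists>z::int. Lo' \<le> ps w v' + of_int z * ps w n \<and> ps w v' + of_int z * ps w n \<le> Hi'"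
      proof
        assume "v' = v" then show ?thesis using z1 by (intro exI[of _ z1]) (auto simp: Hi'_def Lo'_def)
      next
        assume "v' \<in> vis"
        then obtain z where "Lo \<le> ps w v' + of_int z * ps w n \<and> ps w v' + of_int z * ps w n \<le> Hi" using I(7) by blast
        then show ?thesis by (intro exI[of _ z]) (auto simp: Hi'_def Lo'_def)
      qed
    qed
    have cst: "c + ring_W n w {pos ! j, v} - real (length (pos[j := v])) * q = (c - real (length pos) * q) + \<bar>p' - p\<bar>"
      using d p'_def by simp
    show "Hi' - Lo' \<le> c + ring_W n w {pos ! j, v} - real (length (pos[j := v])) * q"
      unfolding cst using I(8) pb I(5,6) by (auto simp: Hi'_def Lo'_def)
    show "2 * (Hi' - Lo') - sum_list (map abs (P[j := p'])) \<le> c + ring_W n w {pos ! j, v} - real (length (pos[j := v])) * q"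
      unfolding cst sl using I(9) pb I(5,6) by (auto simp: Hi'_def Lo'_def)
  qed
qed

lemma Inv_exec:
  assumes "n \<ge> 3" "\<forall>i<n. w i > 0"
  shows "Inv n w q pos c vis \<Longrightarrow> exec (ring_edges n) (ring_W n w) 0 q (pos, c, vis) S = Some (pos', c', vis') \<Longrightarrow> Inv n w q pos' c' vis'"
proof (induction S arbitrary: pos c vis)
  case Nil then show ?case by simp
next
  case (Cons mv S)
  then obtain st where s: "step (ring_edges n) (ring_W n w) 0 q (pos, c, vis) mv = Some st"
    and r: "exec (ring_edges n) (ring_W n w) 0 q st S = Some (pos', c', vis')"
    by (auto split: option.splits)
  obtain a b cc where "st = (a, b, cc)" by (cases st)
  then show ?case using Cons.IH[of a b cc] Inv_step[OF assms Cons.prems(1)] s r by simp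
qed



lemma ps_pos: "\<forall>i<n. w i > 0 \<Longrightarrow> a \<le> n \<Longrightarrow> 0 \<le> ps w a"
  using ps_mono[of n w 0 a] by simp

lemma lower_bound:
  assumes n3: "n \<ge> 3" and wp: "\<forall>i<n. w i > 0" and q0: "q \<ge> 0"
    and inv: "Inv n w q pos c vis" and cov: "{..<n} \<subseteq> vis"
  shows "\<exists>j<n. ccost n w q j \<le> c"
proof -
  from inv obtain P Hi Lo where I: "(pos = [] \<longrightarrow> vis = {})"
    "length P = length pos"
    "\<forall>m<length pos. (\<exists>z::int. P ! m = ps w (pos ! m) + of_int z * ps w n) \<and> Lo \<le> P ! m \<and> P ! m \<le> Hi"
    "Lo \<le> 0" "0 \<le> Hi"
    "\<forall>v\<in>vis. \<exists>z::int. Lo \<le> ps w v + of_int z * ps w n \<and> ps w v + of_int z * ps w n \<le> Hi"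
    "Hi - Lo \<le> c - real (length pos) * q"
    "2 * (Hi - Lo) - sum_list (map abs P) \<le> c - real (length pos) * q"
    unfolding Inv_def by blast
  define k where "k = length pos"
  have "0 \<in> vis" using cov n3 by auto
  then have k1: "k \<ge> 1" using I(1) k_def by (cases pos) auto
  have kq: "real k * q \<ge> q" using k1 q0 by (simp add: mult_le_cancel_right1)
  define L where "L = ps w n"
  have "w 0 > 0" using wp n3 by simp
  then have Lpos: "L > 0" unfolding L_def using ps_mono[OF wp, of 1 n] n3 by (simp add: ps_Suc)
  show ?thesis
  proof (cases "Hi - Lo \<ge> L")
    case True
    have "ccost n w q 0 = q + (L - w 0)" using wC_eq[OF n3, of 0 w] n3 by (simp add: ccost_def L_def)
    also have "\<dots> \<le> c" using True I(7) kq wp n3 k_def by force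
    finally show ?thesis using n3 by (intro exI[of _ 0]) auto
  next
    case False
    define A where "A = {v. v < n \<and> ps w v \<le> Hi}"
    have finA: "finite A" unfolding A_def by simp
    have A0: "0 \<in> A" unfolding A_def using n3 I(5) by simp
    define j where "j = Max A"
    have jA: "j \<in> A" unfolding j_def using finA A0 by (intro Max_in) auto
    have jmax: "\<And>v. v \<in> A \<Longrightarrow> v \<le> j" unfolding j_def using finA by simp
    have jn: "j < n" and a: "ps w j \<le> Hi" using jA unfolding A_def by auto
    define a where "a = ps w j"
    define b where "b = L - ps w (Suc j)"
    have a0: "a \<ge> 0" unfolding a_def using ps_pos[OF wp] jn by simp
    have b0: "b \<ge> 0" unfolding b_def L_def using ps_mono[OF wp, of "Suc j" n] jn by simp
    have wCj: "wC n w j = a + b" using wC_eq[OF n3 jn, of w] unfolding a_def b_def L_def by (simp add: ps_Suc)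
    have ha: "a \<le> Hi" using a a_def by simp
    have hb: "b \<le> - Lo"
    proof (cases "Suc j < n")
      case False then have "Suc j = n" using jn by simp
      then show ?thesis using I(4) b_def L_def by simp
    next
      case True
      have gt: "ps w (Suc j) > Hi"
      proof (rule ccontr)
        assume "\<not> ps w (Suc j) > Hi"
        then have "Suc j \<in> A" using True unfolding A_def by simp
        then show False using jmax by fastforce
      qed
      have "Suc j \<in> vis" using cov True by auto
      then obtain z :: int where z: "Lo \<le> ps w (Suc j) + of_int z * L" "ps w (Suc j) + of_int z * L \<le> Hi"
        using I(6) L_def by blast
      have "z < 0"
      proof (rule ccontr)
        assume "\<not> z < 0"
        then have "of_int z * L \<ge> 0" using Lpos by simp
        then show False using z gt by linarith
      qed
      then have "of_int z \<le> (-1::real)" by simp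
      then have "of_int z * L \<le> - L" using Lpos by (metis mult_right_mono less_imp_le mult_minus1)
      then show ?thesis using z b_def by linarith
    qed
    have base: "real k * q + (a + b) \<le> c" using I(7) ha hb unfolding k_def by linarith
    have one: "k = 1 \<Longrightarrow> q + (a + b) + min a b \<le> c"
    proof -
      assume k: "k = 1"
      then obtain p where P: "P = [p]" using I(2) k_def by (cases P) (auto simp: length_Suc_conv)
      have "Lo \<le> p" "p \<le> Hi" using I(3) k k_def P by auto
      moreover have "sum_list (map abs P) = \<bar>p\<bar>" using P by simp
      moreover have "real (length pos) = 1" using k k_def by simp
      ultimately show ?thesis using I(8) ha hb by (auto simp: min_def split: if_splits)
    qed
    have "ccost n w q j \<le> c"
    proof (cases "j = 0 \<or> j = n - 1")
      case True
      then have "ccost n w q j = q + (a + b)" using wCj by (simp add: ccost_def)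
      then show ?thesis using base kq by linarith
    next
      case False
      then have j1: "Suc j < n" using jn by auto
      have d1: "dC n w j j = a" using dC_j[OF n3 wp j1] a_def by simp
      have d2: "dC n w j (Suc j) = b" using dC_Sj[OF n3 wp j1] b_def L_def by simp
      have vm: "dC n w j (vmin n w j) = min a b" using d1 d2 by (simp add: vmin_def min_def)
      have cc: "ccost n w q j = min (2 * q + (a + b)) (q + min a b + (a + b))"
        using False wCj vm by (simp add: ccost_def)
      show ?thesis
      proof (cases "k = 1")
        case True then show ?thesis using cc one by linarith
      next
        case False
        then have "real k \<ge> 2" using k1 by simp
        then have "real k * q \<ge> 2 * q" using q0 by (simp add: mult_right_mono)
        then show ?thesis using cc base by linarith
      qed
    qed
    then show ?thesis using jn by blast
  qed
qed



lemma p_up: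
  assumes "n \<ge> 3" "i < n"
  shows "iw (ring_edges n) [0..<Suc i] \<and> wl (ring_W n w) [0..<Suc i] = ps w i"
proof
  show "iw (ring_edges n) [0..<Suc i]"
    by (rule iw_upt) (use ring_edges_succ assms in auto)
  show "wl (ring_W n w) [0..<Suc i] = ps w i" using wl_upt[OF assms(1) assms(2), of 0 w] by (simp del: upt_Suc)
qed

lemma p_down:
  assumes "n \<ge> 3" "Suc i < n"
  shows "iw (ring_edges n) (0 # rev [Suc i..<n]) \<and> wl (ring_W n w) (0 # rev [Suc i..<n]) = ps w n - ps w (Suc i)"
proof -
  define xs where "xs = [Suc i..<Suc (n - 1)] @ [0]"
  have eq: "0 # rev [Suc i..<n] = rev xs" unfolding xs_def using assms by simp
  have ne: "[Suc i..<Suc (n - 1)] \<noteq> []" using assms by simp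
  have lst: "last [Suc i..<Suc (n - 1)] = n - 1" using assms by simp
  have "iw (ring_edges n) [Suc i..<Suc (n - 1)]"
    by (rule iw_upt) (use ring_edges_succ assms in auto)
  then have "iw (ring_edges n) xs" unfolding xs_def iw_snoc[OF ne] lst using ring_edges_wrap[OF assms(1)]
    by blast
  then have i1: "iw (ring_edges n) (rev xs)" by (simp only: iw_rev)
  have L: "ps w n = ps w (n - 1) + w (n - 1)" using assms(1) ps_Suc[of w "n - 1"] by simp
  have "wl (ring_W n w) (rev xs) = wl (ring_W n w) xs" by (simp only: wl_rev)
  also have "\<dots> = wl (ring_W n w) [Suc i..<Suc (n - 1)] + ring_W n w {last [Suc i..<Suc (n - 1)], 0}"
    unfolding xs_def by (rule wl_snoc[OF ne])
  also have "\<dots> = wl (ring_W n w) [Suc i..<Suc (n - 1)] + ring_W n w {n - 1, 0}" by (simp only: lst)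
  also have "\<dots> = ps w n - ps w (Suc i)"
    using wl_upt[OF assms(1), of "n - 1" "Suc i" w] assms ring_W_wrap[OF assms(1)] L by (simp del: upt_Suc)
  finally show ?thesis using i1 eq by simp
qed

lemma p_around:
  assumes "n \<ge> 3" "Suc i < n"
  shows "iw (ring_edges n) ([Suc i..<n] @ [0..<Suc i]) \<and> wl (ring_W n w) ([Suc i..<n] @ [0..<Suc i]) = ps w n - ps w (Suc i) + ps w i"
proof -
  have eq: "[Suc i..<n] = [Suc i..<Suc (n - 1)]" using assms by simp
  have ne: "[Suc i..<Suc (n - 1)] \<noteq> []" "[0..<Suc i] \<noteq> []" using assms by simp_all
  have lst: "last [Suc i..<Suc (n - 1)] = n - 1" "hd [0..<Suc i] = 0" using assms by (simp_all add: hd_upt del: upt_Suc)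
  have i1: "iw (ring_edges n) [Suc i..<Suc (n - 1)]"
    by (rule iw_upt) (use ring_edges_succ assms in auto)
  have u: "iw (ring_edges n) [0..<Suc i] \<and> wl (ring_W n w) [0..<Suc i] = ps w i" using p_up assms by simp
  have L: "ps w n = ps w (n - 1) + w (n - 1)" using assms(1) ps_Suc[of w "n - 1"] by simp
  have "iw (ring_edges n) ([Suc i..<Suc (n - 1)] @ [0..<Suc i])"
    using iw_append[OF ne, of "ring_edges n"] lst i1 u ring_edges_wrap[OF assms(1)] by (simp del: upt_Suc)
  moreover have "wl (ring_W n w) ([Suc i..<Suc (n - 1)] @ [0..<Suc i]) = ps w n - ps w (Suc i) + ps w i"
    using wl_append[OF ne, of "ring_W n w"] lst u wl_upt[OF assms(1), of "n - 1" "Suc i" w] assms ring_W_wrap[OF assms(1)] L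
    by (simp del: upt_Suc)
  ultimately show ?thesis unfolding eq by simp
qed

lemma run_start:
  "iw E (0 # vs) \<Longrightarrow> exec E W 0 q ([], 0, {}) (Invoke # trav 0 vs) = Some ([last (0 # vs)], q + wl W (0 # vs), insert 0 (set vs))"
  using exec_trav[of 0 "[0]" E vs W 0 q q "{0}"] by simp

lemma run_second:
  "iw E (0 # vs) \<Longrightarrow> exec E W 0 q ([u], c, vis) (Invoke # trav 1 vs) = Some ([u, last (0 # vs)], c + q + wl W (0 # vs), insert 0 vis \<union> set vs)"
  using exec_trav[of 1 "[u, 0]" E vs W 0 q "c + q" "insert 0 vis"] by simp

lemma run_cont:
  "iw E (u # vs) \<Longrightarrow> exec E W 0 q ([u], c, vis) (trav 0 vs) = Some ([last (u # vs)], c + wl W (u # vs), vis \<union> set vs)"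
  using exec_trav[of 0 "[u]" E vs W 0 q c vis] by simp



lemma path1:
  assumes n3: "n \<ge> 3" and wp: "\<forall>i<n. w i > 0" and i: "0 < i" "Suc i < n" and v: "v = i \<or> v = Suc i"
  shows "iw (ring_edges n) (0 # path_from0 n i v) \<and> wl (ring_W n w) (0 # path_from0 n i v) = dC n w i v
     \<and> last (0 # path_from0 n i v) = v \<and> (v = i \<longrightarrow> set (0 # path_from0 n i v) = {0..i})
     \<and> (v = Suc i \<longrightarrow> set (0 # path_from0 n i v) = insert 0 {Suc i..<n})"
  using v
proof
  assume vi: "v = i"
  have eq: "0 # path_from0 n i v = [0..<Suc i]" using vi i by (simp add: path_from0_def upt_conv_Cons del: upt_Suc)
  show ?thesis unfolding eq using p_up[OF n3, of i w] dC_j[OF n3 wp i(2)] vi i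
    by (simp del: upt_Suc add: last_upt atLeastLessThanSuc_atLeastAtMost)
next
  assume vs: "v = Suc i"
  have eq: "0 # path_from0 n i v = 0 # rev [Suc i..<n]" using vs by (simp add: path_from0_def)
  have "last (0 # rev [Suc i..<n]) = Suc i" using i by (simp add: last_rev hd_upt)
  then show ?thesis unfolding eq using p_down[OF n3 i(2), of w] dC_Sj[OF n3 wp i(2)] vs by simp
qed

lemma path2:
  assumes n3: "n \<ge> 3" and wp: "\<forall>i<n. w i > 0" and i: "0 < i" "Suc i < n" and u: "u = i \<or> u = Suc i"
  shows "iw (ring_edges n) (u # path_between n i u) \<and> wl (ring_W n w) (u # path_between n i u) = wC n w i
     \<and> {..<n} - {u} \<subseteq> set (path_between n i u)"
proof -
  have wc: "wC n w i = ps w n - ps w (Suc i) + ps w i" using wC_eq[OF n3, of i w] i by (simp add: ps_Suc)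
  from u show ?thesis
  proof
    assume ui: "u = i"
    have eq: "u # path_between n i u = rev ([Suc i..<n] @ [0..<Suc i])" using ui by (simp add: path_between_def)
    have st: "set (path_between n i u) = {0..<i} \<union> {Suc i..<n}" using ui by (simp add: path_between_def)
    show ?thesis unfolding eq iw_rev wl_rev using p_around[OF n3 i(2), of w] wc st ui by auto
  next
    assume us: "u = Suc i"
    have eq: "u # path_between n i u = [Suc i..<n] @ [0..<Suc i]" using us i by (simp add: path_between_def upt_conv_Cons del: upt_Suc)
    have st: "set (path_between n i u) = {Suc (Suc i)..<n} \<union> {0..<Suc i}" using us by (simp add: path_between_def del: upt_Suc)
    show ?thesis unfolding eq using p_around[OF n3 i(2), of w] wc st us by auto
  qed
qed



lemma strategy_ok:
  assumes n3: "n \<ge> 3" and wp: "\<forall>i<n. w i > 0" and q0: "q \<ge> 0" and ist: "istar < n"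
  shows "\<exists>pos c vis. run (ring_edges n) (ring_W n w) 0 q (RingOffline n w q istar) = Some (pos, c, vis)
           \<and> {..<n} \<subseteq> vis \<and> c \<le> ccost n w q istar"
proof -
  let ?E = "ring_edges n" and ?W = "ring_W n w"
  have L: "ps w n = ps w (n - 1) + w (n - 1)" using n3 ps_Suc[of w "n - 1"] by simp
  consider "istar = 0" | "istar \<noteq> 0 \<and> istar = n - 1" | "0 < istar \<and> Suc istar < n" using ist by linarith
  then show ?thesis
  proof cases
    case 1
    have pd: "iw ?E (0 # rev [Suc 0..<n]) \<and> wl ?W (0 # rev [Suc 0..<n]) = ps w n - ps w (Suc 0)"
      using p_down[OF n3, of 0 w] n3 by simp
    have R: "RingOffline n w q istar = Invoke # trav 0 (rev [Suc 0..<n])" using 1 by (simp add: RingOffline_def)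
    have c: "ccost n w q istar = q + (ps w n - ps w (Suc 0))" using 1 wC_eq[OF n3, of 0 w] n3 by (simp add: ccost_def ps_Suc)
    have cov: "{..<n} \<subseteq> insert 0 (set (rev [Suc 0..<n]))" by auto
    show ?thesis unfolding run_def R using run_start[of ?E "rev [Suc 0..<n]" ?W q] pd c cov by auto
  next
    case 2
    have pu: "iw ?E [0..<Suc (n - 1)] \<and> wl ?W [0..<Suc (n - 1)] = ps w (n - 1)"
      using p_up[OF n3, of "n - 1" w] n3 by simp
    have eq: "0 # [Suc 0..<n] = [0..<Suc (n - 1)]" using n3 by (simp add: upt_conv_Cons del: upt_Suc)
    have R: "RingOffline n w q istar = Invoke # trav 0 [Suc 0..<n]" using 2 by (simp add: RingOffline_def)
    have c: "ccost n w q istar = q + ps w (n - 1)" using 2 wC_eq[OF n3, of "n - 1" w] n3 L by (simp add: ccost_def)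
    have cov: "{..<n} \<subseteq> insert 0 (set [Suc 0..<n])" by auto
    show ?thesis unfolding run_def R using run_start[of ?E "[Suc 0..<n]" ?W q] pu c cov unfolding eq by auto
  next
    case 3
    define i where "i = istar"
    have i: "0 < i" "Suc i < n" using 3 i_def by auto
    have ni: "\<not> (i = 0 \<or> i = n - 1)" using i by auto
    define vm where "vm = vmin n w i"
    define vM where "vM = vmax n w i"
    have vv: "(vm = i \<and> vM = Suc i) \<or> (vm = Suc i \<and> vM = i)" unfolding vm_def vM_def vmin_def vmax_def by auto
    have vm1: "vm = i \<or> vm = Suc i" "vM = i \<or> vM = Suc i" using vv by auto
    note P1 = path1[OF n3 wp i vm1(1)]
    note P2 = path1[OF n3 wp i vm1(2)]
    note PB = path2[OF n3 wp i, of vm, OF vm1(1)]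
    have sumd: "dC n w i vm + dC n w i vM = wC n w i"
      using vv dC_j[OF n3 wp i(2)] dC_Sj[OF n3 wp i(2)] wC_eq[OF n3, of i w] i by (auto simp: ps_Suc)
    have cc: "ccost n w q i = min (2 * q + wC n w i) (q + dC n w i vm + wC n w i)"
      using ni by (simp add: ccost_def vm_def)
    show ?thesis
    proof (cases "2 * q + wC n w i < q + dC n w i vm + wC n w i")
      case True
      have R: "RingOffline n w q istar = (Invoke # trav 0 (path_from0 n i vm)) @ (Invoke # trav 1 (path_from0 n i vM))"
        using True 3 ni i_def unfolding RingOffline_def vm_def vM_def by simp
      let ?p1 = "path_from0 n i vm" and ?p2 = "path_from0 n i vM"
      have cov: "{..<n} \<subseteq> insert 0 (insert 0 (set ?p1)) \<union> set ?p2"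
      proof -
        have A: "set (0 # path_from0 n i i) = {0..i}" using path1[OF n3 wp i, of i] by blast
        have B: "set (0 # path_from0 n i (Suc i)) = insert 0 {Suc i..<n}" using path1[OF n3 wp i, of "Suc i"] by blast
        have C: "{..<n} \<subseteq> {0..i} \<union> insert 0 {Suc i..<n}" by auto
        have "{..<n} \<subseteq> set (0 # path_from0 n i vm) \<union> set (0 # path_from0 n i vM)"
          using vv
        proof
          assume "vm = i \<and> vM = Suc i" then show ?thesis using A B C by (simp only:)
        next
          assume "vm = Suc i \<and> vM = i" then show ?thesis using A B C by (simp only: Un_commute)
        qed
        then show ?thesis by auto
      qed
      have e1: "exec ?E ?W 0 q ([], 0, {}) (Invoke # trav 0 ?p1) = Some ([vm], q + dC n w i vm, insert 0 (set ?p1))"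
        using run_start[of ?E ?p1 ?W q] P1 by simp
      have e2: "exec ?E ?W 0 q ([vm], q + dC n w i vm, insert 0 (set ?p1)) (Invoke # trav 1 ?p2)
          = Some ([vm, vM], q + dC n w i vm + q + dC n w i vM, insert 0 (insert 0 (set ?p1)) \<union> set ?p2)"
        using run_second[of ?E ?p2 ?W q vm "q + dC n w i vm" "insert 0 (set ?p1)"] P2 by simp
      have "run ?E ?W 0 q (RingOffline n w q istar) = Some ([vm, vM], q + dC n w i vm + q + dC n w i vM, insert 0 (insert 0 (set ?p1)) \<union> set ?p2)"
        unfolding run_def R exec_append e1 using e2 by simp
      moreover have "q + dC n w i vm + q + dC n w i vM \<le> ccost n w q istar"
        using True cc sumd i_def by simp
      ultimately show ?thesis using cov by blast
    next
      case False
      have R: "RingOffline n w q istar = (Invoke # trav 0 (path_from0 n i vm)) @ trav 0 (path_between n i vm)"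
        using False 3 ni i_def unfolding RingOffline_def vm_def by simp
      have lst: "last (0 # path_from0 n i vm) = vm" using P1 by simp
      let ?p1 = "path_from0 n i vm" and ?p3 = "path_between n i vm"
      have cov: "{..<n} \<subseteq> insert 0 (set ?p1) \<union> set ?p3"
      proof -
        have "vm \<in> set (0 # path_from0 n i vm)" using lst by (metis last_in_set list.distinct(1))
        then show ?thesis using PB by auto
      qed
      have e1: "exec ?E ?W 0 q ([], 0, {}) (Invoke # trav 0 ?p1) = Some ([vm], q + dC n w i vm, insert 0 (set ?p1))"
        using run_start[of ?E ?p1 ?W q] P1 by simp
      have e2: "exec ?E ?W 0 q ([vm], q + dC n w i vm, insert 0 (set ?p1)) (trav 0 ?p3)
          = Some ([last (vm # ?p3)], q + dC n w i vm + wC n w i, insert 0 (set ?p1) \<union> set ?p3)"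
        using run_cont[of ?E vm ?p3 ?W q "q + dC n w i vm" "insert 0 (set ?p1)"] PB by simp
      have "run ?E ?W 0 q (RingOffline n w q istar) = Some ([last (vm # ?p3)], q + dC n w i vm + wC n w i, insert 0 (set ?p1) \<union> set ?p3)"
        unfolding run_def R exec_append e1 using e2 by simp
      moreover have "q + dC n w i vm + wC n w i \<le> ccost n w q istar"
        using False cc i_def by simp
      ultimately show ?thesis using cov by blast
    qed
  qed
qed

lemma lower_all:
  assumes n3: "n \<ge> 3" and wp: "\<forall>i<n. w i > 0" and q0: "q \<ge> 0"
    and ex: "explores {..<n} (ring_edges n) (ring_W n w) 0 q S"
  shows "\<exists>j<n. ccost n w q j \<le> strat_cost (ring_edges n) (ring_W n w) 0 q S"
proof -
  obtain pos c vis where r: "run (ring_edges n) (ring_W n w) 0 q S = Some (pos, c, vis)" and cov: "{..<n} \<subseteq> vis"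
    using ex unfolding explores_def by blast
  have "Inv n w q pos c vis" using Inv_exec[OF n3 wp Inv_init r[unfolded run_def]] .
  then obtain j where "j < n" "ccost n w q j \<le> c" using lower_bound[OF n3 wp q0 _ cov] by blast
  then show ?thesis using r by (auto simp: strat_cost_def)
qed

theorem mainTheorem1:
  fixes n :: nat and w :: "nat \<Rightarrow> real" and q :: real and istar :: nat
  assumes "n \<ge> 3"
    and "\<forall>i<n. w i > 0"
    and "q \<ge> 0"
    and "istar < n"
    and "\<forall>i<n. ccost n w q istar \<le> ccost n w q i"
  shows "explores {..<n} (ring_edges n) (ring_W n w) 0 q (RingOffline n w q istar)
       \<and> cost_optimal {..<n} (ring_edges n) (ring_W n w) 0 q (RingOffline n w q istar)"
proof -
  obtain pos c vis where r: "run (ring_edges n) (ring_W n w) 0 q (RingOffline n w q istar) = Some (pos, c, vis)"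
    and cov: "{..<n} \<subseteq> vis" and cst: "c \<le> ccost n w q istar"
    using strategy_ok[OF assms(1-4)] by blast
  have ex: "explores {..<n} (ring_edges n) (ring_W n w) 0 q (RingOffline n w q istar)"
    unfolding explores_def using r cov by blast
  have "\<forall>S'. explores {..<n} (ring_edges n) (ring_W n w) 0 q S' \<longrightarrow>
      strat_cost (ring_edges n) (ring_W n w) 0 q (RingOffline n w q istar) \<le> strat_cost (ring_edges n) (ring_W n w) 0 q S'"
  proof (intro allI impI)
    fix S' assume "explores {..<n} (ring_edges n) (ring_W n w) 0 q S'"
    then obtain j where "j < n" "ccost n w q j \<le> strat_cost (ring_edges n) (ring_W n w) 0 q S'"
      using lower_all[OF assms(1-3)] by blast
    moreover have "strat_cost (ring_edges n) (ring_W n w) 0 q (RingOffline n w q istar) = c"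
      using r by (simp add: strat_cost_def)
    ultimately show "strat_cost (ring_edges n) (ring_W n w) 0 q (RingOffline n w q istar) \<le> strat_cost (ring_edges n) (ring_W n w) 0 q S'"
      using cst assms(5) by force
  qed
  then show ?thesis using ex unfolding cost_optimal_def by blast
qed

end
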